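(* For every $k\in\mathbb N^+$, $P_2\le P_k$ (i.e. $P_2$ pp constructs $P_k$).
   Context: $P_k$ is the directed path with vertex set $\{0,\dots,k-1\}$ and edges $(i,i+1)$ for $0\le i<k-1$. A primitive positive formula is $\exists y_1,\dots,y_n(\psi_1\wedge\dots\wedge\psi_m)$ where each $\psi_i$ is $\bot$, $z_1=z_2$, or $E(z_1,z_2)$. For a digraph $H=(V,E)$, a pp power of dimension $d$ is the digraph on $V^d$ with edge set $\{(u,v):\phi(u_1,\dots,u_d,v_1,\dots,v_d)\text{ holds in }H\}$ for a pp formula $\phi$. $H\le G$ means $G$ is homomorphically equivalent (homomorphisms in both directions) to a pp power of $H$. *)

theory Defs
  imports Main
begin

type_synonym 'a digraph = "'a set \<times> ('a \<times> 'a) set"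

definition is_digraph :: "'a digraph \<Rightarrow> bool" where
  "is_digraph G \<longleftrightarrow> snd G \<subseteq> fst G \<times> fst G"

definition dpath :: "nat \<Rightarrow> nat digraph" where
  "dpath k = ({0..<k}, {(i, i + 1) | i. i + 1 < k})"

datatype atom = Bot | Eq nat nat | Edge nat nat

text \<open>A pp formula \<exists>y_1..y_n (psi_1 \<and> ... \<and> psi_m): the number n of existentially
  quantified variables and the list of atoms. For a pp power of dimension d, variables
  0..d-1 are u_1..u_d, d..2d-1 are v_1..v_d, and 2d..2d+n-1 are y_1..y_n.\<close>
type_synonym ppf = "nat \<times> atom list"

fun atom_vars :: "atom \<Rightarrow> nat set" where
  "atom_vars Bot = {}"
| "atom_vars (Eq i j) = {i, j}"
| "atom_vars (Edge i j) = {i, j}"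

definition pp_wf :: "nat \<Rightarrow> ppf \<Rightarrow> bool" where
  "pp_wf d \<phi> \<longleftrightarrow> (\<forall>a \<in> set (snd \<phi>). \<forall>i \<in> atom_vars a. i < 2 * d + fst \<phi>)"

fun atom_holds :: "'a digraph \<Rightarrow> (nat \<Rightarrow> 'a) \<Rightarrow> atom \<Rightarrow> bool" where
  "atom_holds H s Bot = False"
| "atom_holds H s (Eq i j) = (s i = s j)"
| "atom_holds H s (Edge i j) = ((s i, s j) \<in> snd H)"

definition pp_holds :: "'a digraph \<Rightarrow> ppf \<Rightarrow> 'a list \<Rightarrow> bool" where
  "pp_holds H \<phi> xs \<longleftrightarrow>
     (\<exists>ys. length ys = fst \<phi> \<and> set ys \<subseteq> fst H \<and>
        (\<forall>a \<in> set (snd \<phi>). atom_holds H (\<lambda>i. (xs @ ys) ! i) a))"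

definition pp_power :: "'a digraph \<Rightarrow> nat \<Rightarrow> ppf \<Rightarrow> 'a list digraph" where
  "pp_power H d \<phi> =
     ({u. length u = d \<and> set u \<subseteq> fst H},
      {(u, v). length u = d \<and> set u \<subseteq> fst H \<and> length v = d \<and> set v \<subseteq> fst H \<and>
               pp_holds H \<phi> (u @ v)})"

definition is_hom :: "('a \<Rightarrow> 'b) \<Rightarrow> 'a digraph \<Rightarrow> 'b digraph \<Rightarrow> bool" where
  "is_hom f G H \<longleftrightarrow> (\<forall>x \<in> fst G. f x \<in> fst H) \<and>
                    (\<forall>(x, y) \<in> snd G. (f x, f y) \<in> snd H)"

definition hom_equiv :: "'a digraph \<Rightarrow> 'b digraph \<Rightarrow> bool" where
  "hom_equiv G H \<longleftrightarrow> (\<exists>f. is_hom f G H) \<and> (\<exists>g. is_hom g H G)"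

text \<open>H \<le> G: G is homomorphically equivalent to a pp power of H.\<close>
definition pp_constructs :: "'a digraph \<Rightarrow> 'b digraph \<Rightarrow> bool" where
  "pp_constructs H G \<longleftrightarrow>
     (\<exists>d \<phi>. d \<ge> 1 \<and> pp_wf d \<phi> \<and> hom_equiv (pp_power H d \<phi>) G)"

end

theory Submission
  imports Defs
begin

definition phiK :: "nat \<Rightarrow> ppf" where
  "phiK d = (0, Edge (d - 1) d # map (\<lambda>i. Eq (d + Suc i) i) [0..<d - 1])"

lemma pp_holds_phiK:
  assumes "length u = d" "length v = d" "d \<ge> 1"
  shows "pp_holds (dpath 2) (phiK d) (u @ v) \<longleftrightarrow>
     (u ! (d - 1) = 0 \<and> v ! 0 = 1 \<and> (\<forall>i < d - 1. v ! Suc i = u ! i))"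
  using assms
  by (auto simp: pp_holds_def phiK_def dpath_def nth_append)

lemma wf_phiK: "d \<ge> 1 \<Longrightarrow> pp_wf d (phiK d)"
  by (auto simp: pp_wf_def phiK_def)

lemma sum_step:
  assumes "length u = d" "length v = d" "d \<ge> 1"
    and "u ! (d - 1) = (0::nat)" "v ! 0 = 1" "\<forall>i < d - 1. v ! Suc i = u ! i"
  shows "sum_list v = Suc (sum_list u)"
proof -
  have v: "v = 1 # take (d - 1) u"
    by (rule nth_equalityI) (use assms in \<open>auto simp: nth_Cons split: nat.splits\<close>)
  have u: "u = take (d - 1) u @ [0]"
  proof (rule nth_equalityI)
    show "length u = length (take (d - 1) u @ [0])" using assms by simp
    fix i assume "i < length u"
    then show "u ! i = (take (d - 1) u @ [0]) ! i"
    proof (cases "i < d - 1")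
      case True then show ?thesis using assms by (auto simp: nth_append)
    next
      case False
      then have "i = d - 1" using \<open>i < length u\<close> assms by simp
      then show ?thesis using assms by (auto simp: nth_append)
    qed
  qed
  have "sum_list u = sum_list (take (d - 1) u)"
    by (subst u) simp
  then show ?thesis by (subst v) simp
qed

lemma sum_bound:
  assumes "set u \<subseteq> {0..<2::nat}" shows "sum_list u \<le> length u"
  using assms by (induction u) auto

theorem mainTheorem5:
  fixes k :: nat
  assumes "k \<ge> 1"
  shows "pp_constructs (dpath 2) (dpath k)"
proof (cases "k = 1")
  case True
  have wf: "pp_wf 1 (0, [Bot])" by (simp add: pp_wf_def)
  have "hom_equiv (pp_power (dpath 2) 1 (0, [Bot])) (dpath k)"
    unfolding hom_equiv_def
  proof
    show "\<exists>f. is_hom f (pp_power (dpath 2) 1 (0, [Bot])) (dpath k)"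
      by (rule exI[of _ "\<lambda>_. 0"]) (auto simp: is_hom_def pp_power_def pp_holds_def dpath_def True)
    show "\<exists>g. is_hom g (dpath k) (pp_power (dpath 2) 1 (0, [Bot]))"
      by (rule exI[of _ "\<lambda>_. [0]"]) (auto simp: is_hom_def pp_power_def pp_holds_def dpath_def True)
  qed
  then show ?thesis using wf unfolding pp_constructs_def by blast
next
  case False
  define d where "d = k - 1"
  have d1: "d \<ge> 1" and kd: "k = Suc d" using assms False by (auto simp: d_def)
  have "hom_equiv (pp_power (dpath 2) d (phiK d)) (dpath k)"
    unfolding hom_equiv_def
  proof
    show "\<exists>f. is_hom f (pp_power (dpath 2) d (phiK d)) (dpath k)"
    proof (rule exI[of _ sum_list], unfold is_hom_def, intro conjI ballI)
      fix x assume "x \<in> fst (pp_power (dpath 2) d (phiK d))"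
      then have "length x = d" "set x \<subseteq> {0..<2}" by (auto simp: pp_power_def dpath_def)
      then show "sum_list x \<in> fst (dpath k)"
        using sum_bound[of x] by (auto simp: dpath_def kd)
    next
      fix e assume "e \<in> snd (pp_power (dpath 2) d (phiK d))"
      then obtain u v where e: "e = (u, v)" and l: "length u = d" "length v = d"
        and su: "set u \<subseteq> {0..<2}" and sv: "set v \<subseteq> {0..<2}"
        and h: "pp_holds (dpath 2) (phiK d) (u @ v)"
        by (auto simp: pp_power_def dpath_def)
      have s: "sum_list v = Suc (sum_list u)"
        using h pp_holds_phiK[OF l d1] sum_step[OF l d1] by auto
      have "sum_list v \<le> d" using sum_bound[OF sv] l by simp
      then show "case e of (x, y) \<Rightarrow> (sum_list x, sum_list y) \<in> snd (dpath k)"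
        using s e by (auto simp: dpath_def kd)
    qed
    show "\<exists>g. is_hom g (dpath k) (pp_power (dpath 2) d (phiK d))"
    proof (rule exI[of _ "\<lambda>i. replicate i (1::nat) @ replicate (d - i) 0"], unfold is_hom_def, intro conjI ballI)
      fix x assume "x \<in> fst (dpath k)"
      then show "replicate x (1::nat) @ replicate (d - x) 0 \<in> fst (pp_power (dpath 2) d (phiK d))"
        by (auto simp: dpath_def pp_power_def kd)
    next
      fix e assume "e \<in> snd (dpath k)"
      then obtain i where e: "e = (i, i + 1)" and i: "i < d" by (auto simp: dpath_def kd)
      let ?u = "replicate i (1::nat) @ replicate (d - i) 0"
      let ?v = "replicate (i + 1) (1::nat) @ replicate (d - (i + 1)) 0"
      have l: "length ?u = d" "length ?v = d" using i by auto
      have "pp_holds (dpath 2) (phiK d) (?u @ ?v)"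
        unfolding pp_holds_phiK[OF l d1] using i
        by (auto simp: nth_append)
      then show "case e of (x, y) \<Rightarrow> (replicate x (1::nat) @ replicate (d - x) 0,
               replicate y 1 @ replicate (d - y) 0) \<in> snd (pp_power (dpath 2) d (phiK d))"
        using e i by (auto simp: pp_power_def dpath_def)
    qed
  qed
  then show ?thesis using wf_phiK[OF d1] d1 unfolding pp_constructs_def by blast
qed

end
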